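(* Let $n\ge 2$. The completely isolated subsemigroups of $\overline{\mathcal{PI}^{\ast}}_n$ are exactly $\overline{\mathcal{PI}^{\ast}}_n$, $\mathcal{S}_n$ and $\overline{\mathcal{PI}^{\ast}}_n\setminus\mathcal{S}_n$.
   Context: Let $X=\{1,\dots,n\}$, $X'=\{1',\dots,n'\}$. $\overline{\mathcal{PI}^{\ast}}_n$ is the set of partitions of $X\cup X'$ each of whose blocks is a singleton (point) or a generalised line (a set meeting both $X$ and $X'$), with product $\circ$: $\alpha\circ\beta$ has as generalised lines exactly the sets $A\cup D'$ such that $A\cup B'$ is a generalised line of $\alpha$ and $B\cup D'$ is a generalised line of $\beta$ (for the same $B\subseteq X$), all other elements being points. $\mathcal{S}_n$ is its group of units: elements all of whose blocks are $\{x,\pi(x)'\}$ for a permutation $\pi$ of $X$. A subsemigroup $T$ of a semigroup $S$ is completely isolated if for all $a,b\in S$, $ab\in T$ implies $a\in T$ or $b\in T$. *)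

theory Defs
  imports "HOL-Library.Disjoint_Sets"
begin

text \<open>Points of X \<union> X': (i, False) is i \<in> X, (i, True) is i' \<in> X'.\<close>

definition Omega :: "nat \<Rightarrow> (nat \<times> bool) set" where
  "Omega n = {1..n} \<times> UNIV"

definition top_part :: "(nat \<times> bool) set \<Rightarrow> nat set" where
  "top_part b = {i. (i, False) \<in> b}"

definition bot_part :: "(nat \<times> bool) set \<Rightarrow> nat set" where
  "bot_part b = {i. (i, True) \<in> b}"

definition mk_block :: "nat set \<Rightarrow> nat set \<Rightarrow> (nat \<times> bool) set" where
  "mk_block A D = (\<lambda>i. (i, False)) ` A \<union> (\<lambda>i. (i, True)) ` D"

definition is_gline :: "(nat \<times> bool) set \<Rightarrow> bool" where
  "is_gline b \<longleftrightarrow> top_part b \<noteq> {} \<and> bot_part b \<noteq> {}"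

definition PIstar :: "nat \<Rightarrow> (nat \<times> bool) set set set" where
  "PIstar n = {P. partition_on (Omega n) P \<and> (\<forall>b\<in>P. is_singleton b \<or> is_gline b)}"

definition glines :: "(nat \<times> bool) set set \<Rightarrow> (nat \<times> bool) set set" where
  "glines P = {b \<in> P. is_gline b}"

definition comp :: "nat \<Rightarrow> (nat \<times> bool) set set \<Rightarrow> (nat \<times> bool) set set \<Rightarrow> (nat \<times> bool) set set" where
  "comp n \<alpha> \<beta> =
     (let L = {mk_block (top_part a) (bot_part b) | a b.
                 a \<in> glines \<alpha> \<and> b \<in> glines \<beta> \<and> bot_part a = top_part b}
      in L \<union> {{x} | x. x \<in> Omega n \<and> x \<notin> \<Union>L})"

definition Sym :: "nat \<Rightarrow> (nat \<times> bool) set set set" where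
  "Sym n = {P. \<exists>\<pi>. bij_betw \<pi> {1..n} {1..n} \<and>
                   P = {{(x, False), (\<pi> x, True)} | x. x \<in> {1..n}}}"

text \<open>Subsemigroups are nonempty (standard convention).\<close>
definition subsemigroup :: "nat \<Rightarrow> (nat \<times> bool) set set set \<Rightarrow> bool" where
  "subsemigroup n T \<longleftrightarrow> T \<noteq> {} \<and> T \<subseteq> PIstar n \<and> (\<forall>a\<in>T. \<forall>b\<in>T. comp n a b \<in> T)"

definition completely_isolated :: "nat \<Rightarrow> (nat \<times> bool) set set set \<Rightarrow> bool" where
  "completely_isolated n T \<longleftrightarrow> subsemigroup n T \<and>
     (\<forall>a\<in>PIstar n. \<forall>b\<in>PIstar n. comp n a b \<in> T \<longrightarrow> a \<in> T \<or> b \<in> T)"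

end

theory Submission
  imports Defs "HOL-Combinatorics.Permutations"
begin

definition of_lines :: "nat \<Rightarrow> (nat \<times> bool) set set \<Rightarrow> (nat \<times> bool) set set" where
  "of_lines n L = L \<union> {{x} | x. x \<in> Omega n \<and> x \<notin> \<Union>L}"

definition valid_lines :: "nat \<Rightarrow> (nat \<times> bool) set set \<Rightarrow> bool" where
  "valid_lines n L \<longleftrightarrow> (\<forall>l\<in>L. is_gline l \<and> l \<subseteq> Omega n) \<and>
     (\<forall>l\<in>L. \<forall>l'\<in>L. l \<noteq> l' \<longrightarrow> l \<inter> l' = {})"

definition CLL :: "(nat \<times> bool) set set \<Rightarrow> (nat \<times> bool) set set \<Rightarrow> (nat \<times> bool) set set" where
  "CLL A B = {mk_block (top_part a) (bot_part b) | a b. a \<in> A \<and> b \<in> B \<and> bot_part a = top_part b}"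

definition symel :: "nat \<Rightarrow> (nat \<Rightarrow> nat) \<Rightarrow> (nat \<times> bool) set set" where
  "symel n p = {{(x, False), (p x, True)} | x. x \<in> {1..n}}"

lemma comp_eq: "comp n a b = of_lines n (CLL (glines a) (glines b))"
  unfolding comp_def of_lines_def CLL_def Let_def by (rule refl)

lemma top_mk[simp]: "top_part (mk_block A D) = A"
  by (auto simp: top_part_def mk_block_def)
lemma bot_mk[simp]: "bot_part (mk_block A D) = D"
  by (auto simp: bot_part_def mk_block_def)
lemma mk_tb[simp]: "mk_block (top_part b) (bot_part b) = b"
proof (rule set_eqI)
  fix x :: "nat \<times> bool"
  obtain i c where x: "x = (i, c)" by (cases x)
  show "x \<in> mk_block (top_part b) (bot_part b) \<longleftrightarrow> x \<in> b"
    unfolding x by (cases c) (auto simp: top_part_def bot_part_def mk_block_def)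
qed
lemma mk_Int: "mk_block A D \<inter> mk_block A' D' = mk_block (A \<inter> A') (D \<inter> D')"
  by (auto simp: mk_block_def)
lemma mk_eq_iff: "mk_block A D = mk_block A' D' \<longleftrightarrow> A = A' \<and> D = D'"
proof
  assume "mk_block A D = mk_block A' D'"
  hence "top_part (mk_block A D) = top_part (mk_block A' D')" "bot_part (mk_block A D) = bot_part (mk_block A' D')"
    by simp_all
  thus "A = A' \<and> D = D'" by simp
qed simp
lemma mk_empty: "mk_block A D = {} \<longleftrightarrow> A = {} \<and> D = {}"
  by (auto simp: mk_block_def)
lemma mk_sub_Omega: "mk_block A D \<subseteq> Omega n \<longleftrightarrow> A \<subseteq> {1..n} \<and> D \<subseteq> {1..n}"
  by (auto simp: mk_block_def Omega_def)
lemma sub_Omega_iff: "b \<subseteq> Omega n \<longleftrightarrow> top_part b \<subseteq> {1..n} \<and> bot_part b \<subseteq> {1..n}"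
  using mk_sub_Omega[of "top_part b" "bot_part b" n] by simp
lemma pair_mk: "{(x, False), (y, True)} = mk_block {x} {y}"
  by (auto simp: mk_block_def)

lemma gline_not_singleton: "is_gline l \<Longrightarrow> \<not> is_singleton l"
  by (auto simp: is_gline_def is_singleton_def top_part_def bot_part_def)

lemma singleton_not_gline: "\<not> is_gline {x}"
  by (auto simp: is_gline_def top_part_def bot_part_def)

lemma valid_disj:
  assumes "valid_lines n L" "l \<in> L" "l' \<in> L" "l \<noteq> l'"
  shows "top_part l \<inter> top_part l' = {}" "bot_part l \<inter> bot_part l' = {}"
proof -
  have "l \<inter> l' = {}" using assms by (auto simp: valid_lines_def)
  hence "mk_block (top_part l \<inter> top_part l') (bot_part l \<inter> bot_part l') = {}"
    by (metis mk_Int mk_tb)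
  thus "top_part l \<inter> top_part l' = {}" "bot_part l \<inter> bot_part l' = {}"
    by (auto simp: mk_empty)
qed

lemma valid_top_unique:
  assumes "valid_lines n L" "l \<in> L" "l' \<in> L" "top_part l = top_part l'"
  shows "l = l'"
  using valid_disj(1)[OF assms(1-3)] assms by (auto simp: valid_lines_def is_gline_def)

lemma valid_bot_unique:
  assumes "valid_lines n L" "l \<in> L" "l' \<in> L" "bot_part l = bot_part l'"
  shows "l = l'"
  using valid_disj(2)[OF assms(1-3)] assms by (auto simp: valid_lines_def is_gline_def)

lemma of_lines_PI:
  assumes "valid_lines n L"
  shows "of_lines n L \<in> PIstar n"
proof -
  have U: "\<Union>(of_lines n L) = Omega n"
  proof (rule equalityI)
    show "\<Union>(of_lines n L) \<subseteq> Omega n" using assms by (auto simp: of_lines_def valid_lines_def)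
  next
    show "Omega n \<subseteq> \<Union>(of_lines n L)"
    proof
      fix x assume x: "x \<in> Omega n"
      show "x \<in> \<Union>(of_lines n L)"
      proof (cases "x \<in> \<Union>L")
        case True thus ?thesis by (auto simp: of_lines_def)
      next
        case False hence "{x} \<in> of_lines n L" using x unfolding of_lines_def
          by (intro UnI2 CollectI exI[of _ x]) simp
        thus ?thesis by blast
      qed
    qed
  qed
  have D: "disjoint (of_lines n L)"
  proof (rule disjointI)
    fix b c assume b: "b \<in> of_lines n L" and c: "c \<in> of_lines n L" and bc: "b \<noteq> c"
    show "b \<inter> c = {}"
    proof (cases "b \<in> L")
      case True
      show ?thesis
      proof (cases "c \<in> L")
        case True thus ?thesis using \<open>b \<in> L\<close> bc assms by (simp add: valid_lines_def)
      next
        case False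
        then obtain y where "c = {y}" "y \<notin> \<Union>L" using c by (auto simp: of_lines_def)
        thus ?thesis using \<open>b \<in> L\<close> by auto
      qed
    next
      case False
      then obtain x where x: "b = {x}" "x \<notin> \<Union>L" using b by (auto simp: of_lines_def)
      show ?thesis
      proof (cases "c \<in> L")
        case True thus ?thesis using x by auto
      next
        case False
        then obtain y where "c = {y}" using c by (auto simp: of_lines_def)
        thus ?thesis using x bc by auto
      qed
    qed
  qed
  have E: "{} \<notin> of_lines n L"
    using assms by (auto simp: of_lines_def valid_lines_def is_gline_def top_part_def)
  have "\<forall>b\<in>of_lines n L. is_singleton b \<or> is_gline b"
    using assms by (auto simp: of_lines_def valid_lines_def)
  thus ?thesis using U D E by (auto simp: PIstar_def partition_on_def)
qed

lemma glines_of_lines: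
  assumes "valid_lines n L"
  shows "glines (of_lines n L) = L"
  using assms by (auto simp: glines_def of_lines_def valid_lines_def singleton_not_gline)

lemma PI_block_sub: "a \<in> PIstar n \<Longrightarrow> b \<in> a \<Longrightarrow> b \<subseteq> Omega n"
  by (auto simp: PIstar_def partition_on_def)

lemma PI_valid:
  assumes "a \<in> PIstar n"
  shows "valid_lines n (glines a)"
proof -
  have "disjoint a" using assms by (auto simp: PIstar_def partition_on_def)
  thus ?thesis using PI_block_sub[OF assms]
    by (auto simp: valid_lines_def glines_def disjoint_def)
qed

lemma PI_of_lines:
  assumes "a \<in> PIstar n"
  shows "of_lines n (glines a) = a"
proof -
  have P: "partition_on (Omega n) a" and B: "\<forall>b\<in>a. is_singleton b \<or> is_gline b"
    using assms by (auto simp: PIstar_def)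
  have Dj: "disjoint a" using P by (simp add: partition_onD2)
  have U: "\<Union>a = Omega n" using partition_onD1[OF P] by simp
  show ?thesis
  proof (rule set_eqI, rule iffI)
    fix b assume "b \<in> of_lines n (glines a)"
    then consider "b \<in> glines a" | x where "b = {x}" "x \<in> Omega n" "x \<notin> \<Union>(glines a)"
      by (auto simp: of_lines_def)
    thus "b \<in> a"
    proof cases
      case 1 thus ?thesis by (auto simp: glines_def)
    next
      case 2
      then obtain c where c: "c \<in> a" "x \<in> c" using U by auto
      hence "\<not> is_gline c" using 2 by (auto simp: glines_def)
      hence "is_singleton c" using B c by auto
      hence "c = {x}" using c by (auto simp: is_singleton_def)
      thus ?thesis using c 2 by simp
    qed
  next
    fix b assume b: "b \<in> a"
    show "b \<in> of_lines n (glines a)"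
    proof (cases "is_gline b")
      case True thus ?thesis using b by (auto simp: of_lines_def glines_def)
    next
      case False
      hence "is_singleton b" using B b by auto
      then obtain x where x: "b = {x}" by (auto simp: is_singleton_def)
      have "x \<in> Omega n" using U b x by auto
      moreover have "x \<notin> \<Union>(glines a)"
      proof
        assume "x \<in> \<Union>(glines a)"
        then obtain c where "c \<in> a" "is_gline c" "x \<in> c" by (auto simp: glines_def)
        moreover have "c \<noteq> b" using False \<open>is_gline c\<close> by auto
        ultimately have "c \<inter> b = {}" using Dj b by (auto simp: disjoint_def)
        thus False using x \<open>x \<in> c\<close> by auto
      qed
      ultimately show ?thesis unfolding x of_lines_def
        by (intro UnI2 CollectI exI[of _ x]) simp
    qed
  qed
qed

lemma finite_Omega: "finite (Omega n)"
  by (simp add: Omega_def)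

lemma PI_finite: "a \<in> PIstar n \<Longrightarrow> finite a"
  using finite_elements[OF finite_Omega] by (auto simp: PIstar_def)

lemma PI_finite_glines: "a \<in> PIstar n \<Longrightarrow> finite (glines a)"
  using PI_finite by (auto simp: glines_def)


lemma CLL_valid:
  assumes A: "valid_lines n A" and B: "valid_lines n B"
  shows "valid_lines n (CLL A B)"
proof -
  have G: "is_gline l \<and> l \<subseteq> Omega n" if "l \<in> CLL A B" for l
  proof -
  from that obtain a b where ab: "l = mk_block (top_part a) (bot_part b)" "a \<in> A" "b \<in> B"
    "bot_part a = top_part b" by (auto simp: CLL_def)
  have "top_part a \<noteq> {}" "bot_part b \<noteq> {}" "a \<subseteq> Omega n" "b \<subseteq> Omega n"
    using A B ab by (auto simp: valid_lines_def is_gline_def)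
  thus "is_gline l \<and> l \<subseteq> Omega n" using ab
    by (auto simp: is_gline_def mk_sub_Omega sub_Omega_iff)
  qed
  have D: "l \<inter> l' = {}" if l: "l \<in> CLL A B" and l': "l' \<in> CLL A B" and ne: "l \<noteq> l'" for l l'
  proof -
  obtain a b where ab: "l = mk_block (top_part a) (bot_part b)" "a \<in> A" "b \<in> B"
    "bot_part a = top_part b" using l by (auto simp: CLL_def)
  obtain a' b' where ab': "l' = mk_block (top_part a') (bot_part b')" "a' \<in> A" "b' \<in> B"
    "bot_part a' = top_part b'" using l' by (auto simp: CLL_def)
  have "a \<noteq> a'"
  proof
    assume "a = a'"
    hence "b = b'" using valid_top_unique[OF B ab(3) ab'(3)] ab ab' by simp
    thus False using ne ab ab' \<open>a = a'\<close> by simp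
  qed
  have "b \<noteq> b'"
  proof
    assume "b = b'"
    hence "a = a'" using valid_bot_unique[OF A ab(2) ab'(2)] ab ab' by simp
    thus False using \<open>a \<noteq> a'\<close> by simp
  qed
  have "top_part a \<inter> top_part a' = {}" using valid_disj(1)[OF A ab(2) ab'(2) \<open>a \<noteq> a'\<close>] .
  moreover have "bot_part b \<inter> bot_part b' = {}" using valid_disj(2)[OF B ab(3) ab'(3) \<open>b \<noteq> b'\<close>] .
  ultimately show "l \<inter> l' = {}" using ab ab' by (simp add: mk_Int mk_empty)
  qed
  show ?thesis using G D unfolding valid_lines_def by blast
qed

lemma comp_PI: "a \<in> PIstar n \<Longrightarrow> b \<in> PIstar n \<Longrightarrow> comp n a b \<in> PIstar n"
  unfolding comp_eq by (intro of_lines_PI CLL_valid PI_valid)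

lemma glines_comp: "a \<in> PIstar n \<Longrightarrow> b \<in> PIstar n \<Longrightarrow> glines (comp n a b) = CLL (glines a) (glines b)"
  unfolding comp_eq by (intro glines_of_lines CLL_valid PI_valid)

lemma card_CLL_left:
  assumes A: "valid_lines n A" and B: "valid_lines n B" and fA: "finite A"
  shows "card (CLL A B) \<le> card {a\<in>A. \<exists>b\<in>B. bot_part a = top_part b}"
proof -
  let ?M = "{a\<in>A. \<exists>b\<in>B. bot_part a = top_part b}"
  define g where "g a = mk_block (top_part a) (bot_part (SOME b. b \<in> B \<and> bot_part a = top_part b))" for a
  have "CLL A B \<subseteq> g ` ?M"
  proof
    fix l assume "l \<in> CLL A B"
    then obtain a b where ab: "l = mk_block (top_part a) (bot_part b)" "a \<in> A" "b \<in> B"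
      "bot_part a = top_part b" by (auto simp: CLL_def)
    define b' where "b' = (SOME b. b \<in> B \<and> bot_part a = top_part b)"
    have "\<exists>b. b \<in> B \<and> bot_part a = top_part b" using ab by blast
    hence bb: "b' \<in> B \<and> bot_part a = top_part b'"
      unfolding b'_def by (rule someI_ex)
    have "top_part b' = top_part b" using bb ab(4) by simp
    hence "b' = b" using valid_top_unique[OF B, of b' b] bb ab(3) by blast
    hence "l = g a" unfolding ab(1) g_def b'_def[symmetric] by (rule arg_cong[symmetric])
    moreover have "a \<in> ?M" using ab by auto
    ultimately show "l \<in> g ` ?M" by blast
  qed
  moreover have fM: "finite ?M" using fA by simp
  ultimately have "card (CLL A B) \<le> card (g ` ?M)" by (intro card_mono finite_imageI)
  also have "\<dots> \<le> card ?M" using fM by (rule card_image_le)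
  finally show ?thesis .
qed

lemma card_CLL_right:
  assumes A: "valid_lines n A" and B: "valid_lines n B" and fB: "finite B"
  shows "card (CLL A B) \<le> card {b\<in>B. \<exists>a\<in>A. bot_part a = top_part b}"
proof -
  let ?M = "{b\<in>B. \<exists>a\<in>A. bot_part a = top_part b}"
  define g where "g b = mk_block (top_part (SOME a. a \<in> A \<and> bot_part a = top_part b)) (bot_part b)" for b
  have "CLL A B \<subseteq> g ` ?M"
  proof
    fix l assume "l \<in> CLL A B"
    then obtain a b where ab: "l = mk_block (top_part a) (bot_part b)" "a \<in> A" "b \<in> B"
      "bot_part a = top_part b" by (auto simp: CLL_def)
    define a' where "a' = (SOME a. a \<in> A \<and> bot_part a = top_part b)"
    have "\<exists>a. a \<in> A \<and> bot_part a = top_part b" using ab by blast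
    hence aa: "a' \<in> A \<and> bot_part a' = top_part b"
      unfolding a'_def by (rule someI_ex)
    have "bot_part a' = bot_part a" using aa ab(4) by simp
    hence "a' = a" using valid_bot_unique[OF A, of a' a] aa ab(2) by blast
    hence "l = g b" unfolding ab(1) g_def a'_def[symmetric] by simp
    moreover have "b \<in> ?M" using ab by auto
    ultimately show "l \<in> g ` ?M" by blast
  qed
  moreover have fM: "finite ?M" using fB by simp
  ultimately have "card (CLL A B) \<le> card (g ` ?M)" by (intro card_mono finite_imageI)
  also have "\<dots> \<le> card ?M" using fM by (rule card_image_le)
  finally show ?thesis .
qed

lemma rank_comp_le:
  assumes "a \<in> PIstar n" "b \<in> PIstar n"
  shows "card (glines (comp n a b)) \<le> card (glines a)" "card (glines (comp n a b)) \<le> card (glines b)"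
proof -
  have "card (glines (comp n a b)) \<le> card {x\<in>glines a. \<exists>y\<in>glines b. bot_part x = top_part y}"
    unfolding glines_comp[OF assms] by (rule card_CLL_left[OF PI_valid[OF assms(1)] PI_valid[OF assms(2)] PI_finite_glines[OF assms(1)]])
  also have "\<dots> \<le> card (glines a)" by (rule card_mono) (use PI_finite_glines[OF assms(1)] in auto)
  finally show "card (glines (comp n a b)) \<le> card (glines a)" .
  have "card (glines (comp n a b)) \<le> card {y\<in>glines b. \<exists>x\<in>glines a. bot_part x = top_part y}"
    unfolding glines_comp[OF assms] by (rule card_CLL_right[OF PI_valid[OF assms(1)] PI_valid[OF assms(2)] PI_finite_glines[OF assms(2)]])
  also have "\<dots> \<le> card (glines b)" by (rule card_mono) (use PI_finite_glines[OF assms(2)] in auto)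
  finally show "card (glines (comp n a b)) \<le> card (glines b)" .
qed

lemma symel_alt: "symel n p = (\<lambda>x. mk_block {x} {p x}) ` {1..n}"
  by (auto simp: symel_def pair_mk)

lemma of_lines_full: "\<Union>L = Omega n \<Longrightarrow> of_lines n L = L"
  by (auto simp: of_lines_def)

lemma symel_valid:
  assumes "bij_betw p {1..n} {1..n}"
  shows "valid_lines n (symel n p)"
proof -
  have inj: "inj_on p {1..n}" and im: "p ` {1..n} = {1..n}" using assms by (auto simp: bij_betw_def)
  have G: "is_gline l \<and> l \<subseteq> Omega n" if "l \<in> (\<lambda>x. mk_block {x} {p x}) ` {1..n}" for l
  proof -
    from that obtain x where x: "x \<in> {1..n}" "l = mk_block {x} {p x}" by auto
    have "p x \<in> {1..n}" using im x by auto
    thus "is_gline l \<and> l \<subseteq> Omega n" using x by (simp add: is_gline_def mk_sub_Omega)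
  qed
  have D: "l \<inter> l' = {}" if "l \<in> (\<lambda>x. mk_block {x} {p x}) ` {1..n}" "l' \<in> (\<lambda>x. mk_block {x} {p x}) ` {1..n}"
      and ne: "l \<noteq> l'" for l l'
  proof -
    from that(1) obtain x where x: "x \<in> {1..n}" "l = mk_block {x} {p x}" by blast
    from that(2) obtain y where y: "y \<in> {1..n}" "l' = mk_block {y} {p y}" by blast
    have "x \<noteq> y" using ne x y by auto
    hence "p x \<noteq> p y" using inj x y by (auto dest: inj_onD)
    thus "l \<inter> l' = {}" using x y \<open>x \<noteq> y\<close> by (simp add: mk_Int mk_empty)
  qed
  show ?thesis using G D unfolding valid_lines_def symel_alt by blast
qed

lemma symel_Union:
  assumes "bij_betw p {1..n} {1..n}"
  shows "\<Union>(symel n p) = Omega n"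
proof -
  have im: "p ` {1..n} = {1..n}" using assms by (auto simp: bij_betw_def)
  show ?thesis
  proof (rule equalityI)
    show "\<Union>(symel n p) \<subseteq> Omega n" using im by (auto simp: symel_def Omega_def)
  next
    show "Omega n \<subseteq> \<Union>(symel n p)"
    proof
      fix z assume z: "z \<in> Omega n"
      obtain i c where zc: "z = (i, c)" by (cases z)
      have i: "i \<in> {1..n}" using z zc by (auto simp: Omega_def)
      show "z \<in> \<Union>(symel n p)"
      proof (cases c)
        case False
        have "{(i, False), (p i, True)} \<in> symel n p" using i by (auto simp: symel_def)
        thus ?thesis using zc False by blast
      next
        case True
        have "i \<in> p ` {1..n}" unfolding im using i .
        then obtain x where x: "x \<in> {1..n}" "i = p x" by (auto simp: image_iff)
        have "{(x, False), (p x, True)} \<in> symel n p" using x by (auto simp: symel_def)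
        thus ?thesis using zc True x by blast
      qed
    qed
  qed
qed

lemma symel_PI:
  assumes "bij_betw p {1..n} {1..n}"
  shows "symel n p \<in> PIstar n" "glines (symel n p) = symel n p"
proof -
  have "of_lines n (symel n p) = symel n p" using symel_Union[OF assms] by (rule of_lines_full)
  thus "symel n p \<in> PIstar n" "glines (symel n p) = symel n p"
    using of_lines_PI[OF symel_valid[OF assms]] glines_of_lines[OF symel_valid[OF assms]] by simp_all
qed

lemma card_symel: "card (symel n p) = n"
proof -
  have "inj_on (\<lambda>x. mk_block {x} {p x}) {1..n}"
    by (rule inj_onI) (simp add: mk_eq_iff)
  thus ?thesis by (simp add: symel_alt card_image)
qed

lemma Sym_iff: "a \<in> Sym n \<longleftrightarrow> (\<exists>p. bij_betw p {1..n} {1..n} \<and> a = symel n p)"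
  by (simp add: Sym_def symel_def)

lemma SymI: "bij_betw p {1..n} {1..n} \<Longrightarrow> symel n p \<in> Sym n"
  unfolding Sym_iff by (rule exI[of _ p]) simp

lemma SymE: assumes "a \<in> Sym n" obtains p where "bij_betw p {1..n} {1..n}" "a = symel n p"
  using assms unfolding Sym_iff by (elim exE conjE) simp

lemma Sym_rank: "a \<in> Sym n \<Longrightarrow> a \<in> PIstar n \<and> card (glines a) = n"
proof -
  assume "a \<in> Sym n"
  then obtain p where "bij_betw p {1..n} {1..n}" "a = symel n p" by (rule SymE)
  thus ?thesis using symel_PI card_symel by simp
qed

lemma CLL_symel:
  assumes p: "bij_betw p {1..n} {1..n}"
  shows "CLL (symel n p) (symel n q) = symel n (q \<circ> p)"
proof -
  have im: "p ` {1..n} = {1..n}" using p by (auto simp: bij_betw_def)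
  show ?thesis
  proof (rule equalityI)
    show "CLL (symel n p) (symel n q) \<subseteq> symel n (q \<circ> p)"
    proof
      fix l assume "l \<in> CLL (symel n p) (symel n q)"
      then obtain a b where ab: "l = mk_block (top_part a) (bot_part b)" "a \<in> symel n p" "b \<in> symel n q"
        "bot_part a = top_part b" by (auto simp: CLL_def)
      obtain x where x: "x \<in> {1..n}" "a = mk_block {x} {p x}" using ab(2) by (auto simp: symel_alt)
      obtain y where y: "y \<in> {1..n}" "b = mk_block {y} {q y}" using ab(3) by (auto simp: symel_alt)
      have "y = p x" using ab(4) x y by simp
      hence "l = mk_block {x} {(q \<circ> p) x}" using ab x y by simp
      thus "l \<in> symel n (q \<circ> p)" using x by (auto simp: symel_alt)
    qed
  next
    show "symel n (q \<circ> p) \<subseteq> CLL (symel n p) (symel n q)"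
    proof
      fix l assume "l \<in> symel n (q \<circ> p)"
      then obtain x where x: "x \<in> {1..n}" "l = mk_block {x} {q (p x)}" by (auto simp: symel_alt)
      have px: "p x \<in> {1..n}" using im x by auto
      have "mk_block {x} {p x} \<in> symel n p" using x by (auto simp: symel_alt)
      moreover have "mk_block {p x} {q (p x)} \<in> symel n q" using px by (auto simp: symel_alt)
      ultimately show "l \<in> CLL (symel n p) (symel n q)" unfolding CLL_def using x
        by (intro CollectI exI[of _ "mk_block {x} {p x}"] exI[of _ "mk_block {p x} {q (p x)}"]) simp
    qed
  qed
qed

lemma comp_symel:
  assumes p: "bij_betw p {1..n} {1..n}" and q: "bij_betw q {1..n} {1..n}"
  shows "comp n (symel n p) (symel n q) = symel n (q \<circ> p)"
proof -
  have pq: "bij_betw (q \<circ> p) {1..n} {1..n}" using p q by (rule bij_betw_trans)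
  show ?thesis unfolding comp_eq symel_PI(2)[OF p] symel_PI(2)[OF q] CLL_symel[OF p, of q]
    by (rule of_lines_full[OF symel_Union[OF pq]])
qed

lemma Sym_closed: "a \<in> Sym n \<Longrightarrow> b \<in> Sym n \<Longrightarrow> comp n a b \<in> Sym n"
proof -
  assume "a \<in> Sym n" "b \<in> Sym n"
  obtain p where p: "bij_betw p {1..n} {1..n}" "a = symel n p" using SymE[OF \<open>a \<in> Sym n\<close>] .
  obtain q where q: "bij_betw q {1..n} {1..n}" "b = symel n q" using SymE[OF \<open>b \<in> Sym n\<close>] .
  have "bij_betw (q \<circ> p) {1..n} {1..n}" using p(1) q(1) by (rule bij_betw_trans)
  hence "symel n (q \<circ> p) \<in> Sym n" by (rule SymI)
  moreover have "comp n a b = symel n (q \<circ> p)" unfolding p(2) q(2) by (rule comp_symel[OF p(1) q(1)])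
  ultimately show ?thesis by simp
qed

lemma Sym_permutes:
  assumes "a \<in> Sym n"
  shows "\<exists>p. p permutes {1..n} \<and> a = symel n p"
proof -
  obtain p where p: "bij_betw p {1..n} {1..n}" "a = symel n p" using SymE[OF assms] .
  define p' where "p' x = (if x \<in> {1..n} then p x else x)" for x
  have "bij_betw p' {1..n} {1..n} = bij_betw p {1..n} {1..n}" by (rule bij_betw_cong) (simp add: p'_def)
  hence "bij_betw p' {1..n} {1..n}" using p(1) by simp
  hence "p' permutes {1..n}" by (rule bij_imp_permutes) (auto simp: p'_def)
  moreover have "symel n p' = symel n p" by (auto simp: symel_def p'_def)
  ultimately show ?thesis using p by auto
qed

lemma permutes_symel_Sym: "p permutes {1..n} \<Longrightarrow> symel n p \<in> Sym n"
proof -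
  assume "p permutes {1..n}"
  hence "bij_betw p {1..n} {1..n}" by (rule permutes_imp_bij)
  thus ?thesis by (rule SymI)
qed


lemma line_top_props:
  assumes a: "a \<in> PIstar n" and l: "l \<in> glines a"
  shows "Min (top_part l) \<in> top_part l" "Min (top_part l) \<in> {1..n}"
    "Min (bot_part l) \<in> bot_part l" "Min (bot_part l) \<in> {1..n}"
    "top_part l \<subseteq> {1..n}" "bot_part l \<subseteq> {1..n}"
proof -
  have v: "is_gline l" "l \<subseteq> Omega n" using PI_valid[OF a] l by (auto simp: valid_lines_def)
  have s: "top_part l \<subseteq> {1..n}" "bot_part l \<subseteq> {1..n}" using v(2) by (simp_all add: sub_Omega_iff)
  have f: "finite (top_part l)" "finite (bot_part l)" using s by (auto intro: finite_subset)
  have ne: "top_part l \<noteq> {}" "bot_part l \<noteq> {}" using v(1) by (auto simp: is_gline_def)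
  show "Min (top_part l) \<in> top_part l" "Min (bot_part l) \<in> bot_part l"
    using Min_in f ne by auto
  thus "Min (top_part l) \<in> {1..n}" "Min (bot_part l) \<in> {1..n}" using s by auto
  show "top_part l \<subseteq> {1..n}" "bot_part l \<subseteq> {1..n}" using s by auto
qed

lemma inj_Min_top:
  assumes a: "a \<in> PIstar n"
  shows "inj_on (\<lambda>l. Min (top_part l)) (glines a)"
proof (rule inj_onI)
  fix l l' assume l: "l \<in> glines a" and l': "l' \<in> glines a" and eq: "Min (top_part l) = Min (top_part l')"
  show "l = l'"
  proof (rule ccontr)
    assume "l \<noteq> l'"
    hence "top_part l \<inter> top_part l' = {}" using valid_disj(1)[OF PI_valid[OF a] l l'] by simp
    thus False using line_top_props(1)[OF a l] line_top_props(1)[OF a l'] eq by auto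
  qed
qed

lemma inj_Min_bot:
  assumes a: "a \<in> PIstar n"
  shows "inj_on (\<lambda>l. Min (bot_part l)) (glines a)"
proof (rule inj_onI)
  fix l l' assume l: "l \<in> glines a" and l': "l' \<in> glines a" and eq: "Min (bot_part l) = Min (bot_part l')"
  show "l = l'"
  proof (rule ccontr)
    assume "l \<noteq> l'"
    hence "bot_part l \<inter> bot_part l' = {}" using valid_disj(2)[OF PI_valid[OF a] l l'] by simp
    thus False using line_top_props(3)[OF a l] line_top_props(3)[OF a l'] eq by auto
  qed
qed

lemma rank_le_n:
  assumes a: "a \<in> PIstar n"
  shows "card (glines a) \<le> n"
proof -
  have "card (glines a) \<le> card {1..n}"
    by (rule card_inj_on_le[OF inj_Min_top[OF a]]) (use line_top_props(2)[OF a] in auto)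
  thus ?thesis by simp
qed

lemma rank_full:
  assumes a: "a \<in> PIstar n" and c: "n \<le> card (glines a)"
  shows "a \<in> Sym n"
proof -
  define L where "L = glines a"
  define t where "t = (\<lambda>l. Min (top_part l))"
  define u where "u = (\<lambda>l. Min (bot_part l))"
  have fL: "finite L" using PI_finite_glines[OF a] by (simp add: L_def)
  have it: "inj_on t L" using inj_Min_top[OF a] by (simp add: t_def L_def)
  have iu: "inj_on u L" using inj_Min_bot[OF a] by (simp add: u_def L_def)
  have tsub: "t ` L \<subseteq> {1..n}" using line_top_props(2)[OF a] by (auto simp: t_def L_def)
  have usub: "u ` L \<subseteq> {1..n}" using line_top_props(4)[OF a] by (auto simp: u_def L_def)
  have tim: "t ` L = {1..n}"
    by (rule card_seteq[OF _ tsub]) (use c card_image[OF it] in \<open>simp_all add: L_def\<close>)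
  have uim: "u ` L = {1..n}"
    by (rule card_seteq[OF _ usub]) (use c card_image[OF iu] in \<open>simp_all add: L_def\<close>)
  have topL: "top_part l = {t l}" if l: "l \<in> L" for l
  proof
    show "{t l} \<subseteq> top_part l" using line_top_props(1)[OF a] l by (simp add: t_def L_def)
  next
    show "top_part l \<subseteq> {t l}"
    proof
      fix i assume i: "i \<in> top_part l"
      have "i \<in> {1..n}" using subsetD[OF line_top_props(5)[OF a l[unfolded L_def]] i] .
      then obtain l' where l': "l' \<in> L" "i = t l'" using tim by (metis imageE)
      have "i \<in> top_part l'" using line_top_props(1)[OF a] l' by (simp add: t_def L_def)
      have "l = l'"
      proof (rule ccontr)
        assume "l \<noteq> l'"
        hence "top_part l \<inter> top_part l' = {}" using valid_disj(1)[OF PI_valid[OF a]] l l' by (simp add: L_def)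
        thus False using i \<open>i \<in> top_part l'\<close> by auto
      qed
      thus "i \<in> {t l}" using l' by simp
    qed
  qed
  have botL: "bot_part l = {u l}" if l: "l \<in> L" for l
  proof
    show "{u l} \<subseteq> bot_part l" using line_top_props(3)[OF a] l by (simp add: u_def L_def)
  next
    show "bot_part l \<subseteq> {u l}"
    proof
      fix i assume i: "i \<in> bot_part l"
      have "i \<in> {1..n}" using subsetD[OF line_top_props(6)[OF a l[unfolded L_def]] i] .
      then obtain l' where l': "l' \<in> L" "i = u l'" using uim by (metis imageE)
      have "i \<in> bot_part l'" using line_top_props(3)[OF a] l' by (simp add: u_def L_def)
      have "l = l'"
      proof (rule ccontr)
        assume "l \<noteq> l'"
        hence "bot_part l \<inter> bot_part l' = {}" using valid_disj(2)[OF PI_valid[OF a]] l l' by (simp add: L_def)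
        thus False using i \<open>i \<in> bot_part l'\<close> by auto
      qed
      thus "i \<in> {u l}" using l' by simp
    qed
  qed
  have lform: "l = mk_block {t l} {u l}" if "l \<in> L" for l
    using mk_tb[of l] topL[OF that] botL[OF that] by simp
  define p where "p = u \<circ> inv_into L t"
  have bt: "bij_betw t L {1..n}" using it tim by (simp add: bij_betw_def)
  have bu: "bij_betw u L {1..n}" using iu uim by (simp add: bij_betw_def)
  have bp: "bij_betw p {1..n} {1..n}" unfolding p_def
    by (rule bij_betw_trans[OF bij_betw_inv_into[OF bt] bu])
  have Lsym: "L = symel n p"
  proof (rule equalityI)
    show "L \<subseteq> symel n p"
    proof
      fix l assume l: "l \<in> L"
      have tl: "t l \<in> {1..n}" using tsub l by auto
      have pt: "p (t l) = u l" using it l by (simp add: p_def)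
      have e: "mk_block {t l} {p (t l)} = l" by (simp only: pt) (rule lform[OF l, symmetric])
      show "l \<in> symel n p" unfolding symel_alt by (rule image_eqI[where f="\<lambda>x. mk_block {x} {p x}", OF e[symmetric] tl])
    qed
  next
    show "symel n p \<subseteq> L"
    proof
      fix m assume "m \<in> symel n p"
      then obtain x where x: "x \<in> {1..n}" "m = mk_block {x} {p x}" by (auto simp: symel_alt)
      have xi: "x \<in> t ` L" using x tim by simp
      define l where "l = inv_into L t x"
      have l: "l \<in> L" using inv_into_into[OF xi] by (simp add: l_def)
      have "t l = x" using f_inv_into_f[OF xi] by (simp add: l_def)
      moreover have "p x = u l" by (simp add: p_def l_def)
      ultimately have "m = mk_block {t l} {u l}" using x(2) by simp
      also have "\<dots> = l" by (rule lform[OF l, symmetric])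
      finally have "m = l" .
      thus "m \<in> L" using l by simp
    qed
  qed
  have "a = of_lines n L" using PI_of_lines[OF a] by (simp add: L_def)
  also have "\<dots> = symel n p" using Lsym of_lines_full[OF symel_Union[OF bp]] by simp
  finally show ?thesis using SymI[OF bp] by simp
qed

lemma Sym_factor:
  assumes x: "x \<in> PIstar n" and y: "y \<in> PIstar n" and c: "comp n x y \<in> Sym n"
  shows "x \<in> Sym n" "y \<in> Sym n"
proof -
  have "card (glines (comp n x y)) = n" using Sym_rank[OF c] by simp
  thus "x \<in> Sym n" "y \<in> Sym n" using rank_comp_le[OF x y] rank_full[OF x] rank_full[OF y] by auto
qed

lemma closed_Sym_id:
  assumes HS: "H \<subseteq> Sym n" and h: "h \<in> H" and cl: "\<And>x y. x \<in> H \<Longrightarrow> y \<in> H \<Longrightarrow> comp n x y \<in> H"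
  shows "symel n id \<in> H"
proof -
  have "h \<in> Sym n" using HS h by blast
  then obtain q where q: "q permutes {1..n}" "h = symel n q" using Sym_permutes by blast
  define P where "P = {p. p permutes {1..n} \<and> symel n p \<in> H}"
  have fP: "finite P" unfolding P_def
    by (rule finite_subset[OF _ finite_permutations[of "{1..n}"]]) auto
  have qP: "q \<in> P" using q h by (simp add: P_def)
  have canc: "s = s'" if "s \<circ> q = s' \<circ> q" for s s'
  proof
    fix z
    have "s z = (s \<circ> q) (inv q z)" using permutes_inverses(1)[OF q(1)] by simp
    also have "\<dots> = (s' \<circ> q) (inv q z)" using that by simp
    also have "\<dots> = s' z" using permutes_inverses(1)[OF q(1)] by simp
    finally show "s z = s' z" .
  qed
  have img: "(\<lambda>s. s \<circ> q) ` P \<subseteq> P"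
  proof
    fix r assume "r \<in> (\<lambda>s. s \<circ> q) ` P"
    then obtain s where s: "s \<in> P" "r = s \<circ> q" by blast
    have sp: "s permutes {1..n}" "symel n s \<in> H" using s by (auto simp: P_def)
    have "r permutes {1..n}" using permutes_compose[OF q(1) sp(1)] s by simp
    moreover have "symel n r = comp n (symel n q) (symel n s)"
      using comp_symel[OF permutes_imp_bij[OF q(1)] permutes_imp_bij[OF sp(1)]] s by simp
    moreover have "comp n (symel n q) (symel n s) \<in> H" using cl[OF h[unfolded q(2)] sp(2)] .
    ultimately show "r \<in> P" by (simp add: P_def)
  qed
  have inj: "inj_on (\<lambda>s. s \<circ> q) P" by (rule inj_onI) (rule canc)
  have "(\<lambda>s. s \<circ> q) ` P = P" by (rule endo_inj_surj[OF fP img inj])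
  hence "q \<in> (\<lambda>s. s \<circ> q) ` P" using qP by simp
  then obtain s where s: "s \<in> P" "q = s \<circ> q" by blast
  have "id \<circ> q = s \<circ> q" using s by simp
  hence "s = id" using canc by metis
  thus ?thesis using s by (simp add: P_def)
qed

definition zero :: "nat \<Rightarrow> (nat \<times> bool) set set" where
  "zero n = of_lines n {}"

lemma valid_empty: "valid_lines n {}"
  by (simp add: valid_lines_def)

lemma zero_PI: "zero n \<in> PIstar n" and glines_zero: "glines (zero n) = {}"
  unfolding zero_def by (simp_all add: of_lines_PI glines_of_lines valid_empty)

lemma rank0: assumes "a \<in> PIstar n" "glines a = {}" shows "a = zero n"
  using PI_of_lines[OF assms(1)] assms(2) by (simp add: zero_def)


lemma K:
  assumes TS: "T \<subseteq> PIstar n"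
    and cl: "\<And>x y. x \<in> T \<Longrightarrow> y \<in> T \<Longrightarrow> comp n x y \<in> T"
    and ci: "\<And>x y. x \<in> PIstar n \<Longrightarrow> y \<in> PIstar n \<Longrightarrow> comp n x y \<in> T \<Longrightarrow> x \<in> T \<or> y \<in> T"
    and z: "zero n \<in> T"
  shows "PIstar n - Sym n \<subseteq> T"
proof -
  have main: "\<forall>a. a \<in> PIstar n \<longrightarrow> a \<notin> Sym n \<longrightarrow> card (glines a) = r \<longrightarrow> a \<in> T" for r
  proof (induction r rule: less_induct)
    case (less r)
    show ?case
    proof (intro allI impI)
      fix a assume a: "a \<in> PIstar n" and aS: "a \<notin> Sym n" and ar: "card (glines a) = r"
      define L where "L = glines a"
      have fL: "finite L" using PI_finite_glines[OF a] by (simp add: L_def)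
      have vL: "valid_lines n L" using PI_valid[OF a] by (simp add: L_def)
      have rn: "r < n"
      proof (rule ccontr)
        assume "\<not> r < n"
        hence "n \<le> card (glines a)" using ar by simp
        thus False using rank_full[OF a] aS by simp
      qed
      have sq: "x \<in> T" if x: "x \<in> PIstar n" and xr: "card (glines (comp n x x)) < r" for x
      proof -
        have xx: "comp n x x \<in> PIstar n" using comp_PI[OF x x] .
        have "comp n x x \<notin> Sym n"
        proof
          assume "comp n x x \<in> Sym n"
          hence "card (glines (comp n x x)) = n" using Sym_rank by blast
          thus False using xr rn by simp
        qed
        hence "comp n x x \<in> T" using less.IH[OF xr] xx by blast
        thus "x \<in> T" using ci[OF x x] by blast
      qed
      show "a \<in> T"
      proof (cases "r = 0")
        case True
        hence "glines a = {}" using ar fL by (simp add: L_def)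
        hence "a = zero n" by (rule rank0[OF a])
        thus ?thesis using z by simp
      next
        case False
        hence r1: "1 \<le> r" by simp
        define M where "M = {l\<in>L. \<exists>l'\<in>L. bot_part l = top_part l'}"
        show ?thesis
        proof (cases "M = L")
          case False
          have "M \<subset> L" using False by (auto simp: M_def)
          hence "card M < card L" using fL by (rule psubset_card_mono[rotated])
          moreover have "card (glines (comp n a a)) \<le> card M"
            unfolding glines_comp[OF a a] M_def L_def
            by (rule card_CLL_left[OF PI_valid[OF a] PI_valid[OF a] PI_finite_glines[OF a]])
          ultimately have "card (glines (comp n a a)) < r" using ar by (simp add: L_def)
          thus ?thesis by (rule sq[OF a])
        next
          case True
          define SA where "SA = {k\<in>{1..n}. {k} \<in> top_part ` L}"
          have "card SA \<le> card (top_part ` L)"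
            by (rule card_inj_on_le[of "\<lambda>k. {k}"]) (auto simp: SA_def fL inj_on_def)
          also have "\<dots> \<le> card L" using fL by (rule card_image_le)
          finally have cSA: "card SA \<le> r" using ar by (simp add: L_def)
          obtain k where k: "k \<in> {1..n}" "{k} \<notin> top_part ` L"
          proof (rule ccontr)
            assume "\<not> thesis"
            hence "\<forall>k\<in>{1..n}. {k} \<in> top_part ` L" using that by blast
            hence "SA = {1..n}" by (auto simp: SA_def)
            thus False using cSA rn by simp
          qed
          have "card ({1..n} - {k}) = n - 1" using k(1) by (simp add: card_Diff_singleton)
          hence "r - 1 \<le> card ({1..n} - {k})" using rn by simp
          then obtain I0 where I0: "I0 \<subseteq> {1..n} - {k}" "card I0 = r - 1" "finite I0"
            by (rule obtain_subset_with_card_n)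
          define I where "I = insert k I0"
          have kI0: "k \<notin> I0" using I0 by auto
          have cI: "card I = r" using I0 kI0 r1 by (simp add: I_def card_insert_disjoint)
          have fI: "finite I" using I0 by (simp add: I_def)
          have Isub: "I \<subseteq> {1..n}" using I0 k by (auto simp: I_def)
          obtain f where f: "bij_betw f L I"
            using finite_same_card_bij[OF fL fI] cI ar by (auto simp: L_def)
          have finj: "inj_on f L" and fim: "f ` L = I" using f by (auto simp: bij_betw_def)
          have "k \<in> f ` L" using fim by (simp add: I_def)
          then obtain l0 where l0: "l0 \<in> L" "f l0 = k" by blast
          have fin: "f l \<in> {1..n}" if "l \<in> L" for l using fim Isub that by blast
          have lprops: "top_part l \<noteq> {}" "bot_part l \<noteq> {}" "top_part l \<subseteq> {1..n}" "bot_part l \<subseteq> {1..n}"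
            if "l \<in> L" for l
            using vL that by (auto simp: valid_lines_def is_gline_def sub_Omega_iff)
          define X where "X = (\<lambda>l. mk_block (top_part l) {f l}) ` L"
          define Y where "Y = (\<lambda>l. mk_block {f l} (bot_part l)) ` L"
          have vX: "valid_lines n X"
            unfolding valid_lines_def
          proof (intro conjI)
            show "\<forall>m\<in>X. is_gline m \<and> m \<subseteq> Omega n"
              using lprops fin by (auto simp: X_def is_gline_def mk_sub_Omega)
            show "\<forall>m\<in>X. \<forall>m'\<in>X. m \<noteq> m' \<longrightarrow> m \<inter> m' = {}"
            proof (intro ballI impI)
              fix m m' assume "m \<in> X" "m' \<in> X" "m \<noteq> m'"
              then obtain l l' where l: "l \<in> L" "m = mk_block (top_part l) {f l}"
                and l': "l' \<in> L" "m' = mk_block (top_part l') {f l'}" and "l \<noteq> l'"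
                by (auto simp: X_def)
              have "top_part l \<inter> top_part l' = {}" using valid_disj(1)[OF vL l(1) l'(1) \<open>l \<noteq> l'\<close>] .
              moreover have "f l \<noteq> f l'" using finj l(1) l'(1) \<open>l \<noteq> l'\<close> by (auto dest: inj_onD)
              ultimately show "m \<inter> m' = {}" using l l' by (simp add: mk_Int mk_empty)
            qed
          qed
          have vY: "valid_lines n Y"
            unfolding valid_lines_def
          proof (intro conjI)
            show "\<forall>m\<in>Y. is_gline m \<and> m \<subseteq> Omega n"
              using lprops fin by (auto simp: Y_def is_gline_def mk_sub_Omega)
            show "\<forall>m\<in>Y. \<forall>m'\<in>Y. m \<noteq> m' \<longrightarrow> m \<inter> m' = {}"
            proof (intro ballI impI)
              fix m m' assume "m \<in> Y" "m' \<in> Y" "m \<noteq> m'"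
              then obtain l l' where l: "l \<in> L" "m = mk_block {f l} (bot_part l)"
                and l': "l' \<in> L" "m' = mk_block {f l'} (bot_part l')" and "l \<noteq> l'"
                by (auto simp: Y_def)
              have "bot_part l \<inter> bot_part l' = {}" using valid_disj(2)[OF vL l(1) l'(1) \<open>l \<noteq> l'\<close>] .
              moreover have "f l \<noteq> f l'" using finj l(1) l'(1) \<open>l \<noteq> l'\<close> by (auto dest: inj_onD)
              ultimately show "m \<inter> m' = {}" using l l' by (simp add: mk_Int mk_empty)
            qed
          qed
          define x where "x = of_lines n X"
          define y where "y = of_lines n Y"
          have xP: "x \<in> PIstar n" and gx: "glines x = X"
            using of_lines_PI[OF vX] glines_of_lines[OF vX] by (simp_all add: x_def)
          have yP: "y \<in> PIstar n" and gy: "glines y = Y"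
            using of_lines_PI[OF vY] glines_of_lines[OF vY] by (simp_all add: y_def)
          have fX: "finite X" "finite Y" using fL by (simp_all add: X_def Y_def)
          have CXY: "CLL X Y = L"
          proof (rule equalityI)
            show "CLL X Y \<subseteq> L"
            proof
              fix m assume "m \<in> CLL X Y"
              then obtain p q where pq: "m = mk_block (top_part p) (bot_part q)" "p \<in> X" "q \<in> Y"
                "bot_part p = top_part q" by (auto simp: CLL_def)
              obtain l where l: "l \<in> L" "p = mk_block (top_part l) {f l}" using pq(2) by (auto simp: X_def)
              obtain l' where l': "l' \<in> L" "q = mk_block {f l'} (bot_part l')" using pq(3) by (auto simp: Y_def)
              have "f l = f l'" using pq(4) l l' by simp
              hence "l = l'" using finj l(1) l'(1) by (auto dest: inj_onD)
              hence "m = mk_block (top_part l) (bot_part l)" using pq(1) l l' by simp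
              thus "m \<in> L" using l(1) by simp
            qed
          next
            show "L \<subseteq> CLL X Y"
            proof
              fix l assume l: "l \<in> L"
              have hX: "mk_block (top_part l) {f l} \<in> X" using l by (auto simp: X_def)
              have hY: "mk_block {f l} (bot_part l) \<in> Y" using l by (auto simp: Y_def)
              have "mk_block (top_part (mk_block (top_part l) {f l})) (bot_part (mk_block {f l} (bot_part l))) \<in> CLL X Y"
                unfolding CLL_def
                by (intro CollectI exI[of _ "mk_block (top_part l) {f l}"] exI[of _ "mk_block {f l} (bot_part l)"] conjI refl hX hY) simp
              thus "l \<in> CLL X Y" by simp
            qed
          qed
          have axy: "comp n x y = a"
            unfolding comp_eq gx gy CXY L_def by (rule PI_of_lines[OF a])
          have "card (glines (comp n x x)) < r"
          proof -
            let ?Mx = "{p\<in>X. \<exists>q\<in>X. bot_part p = top_part q}"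
            have "card (glines (comp n x x)) \<le> card ?Mx"
              unfolding glines_comp[OF xP xP] gx by (rule card_CLL_left[OF vX vX fX(1)])
            also have "\<dots> < card X"
            proof (rule psubset_card_mono[OF fX(1)])
              have p0: "mk_block (top_part l0) {k} \<in> X" using l0 by (auto simp: X_def)
              have nM: "mk_block (top_part l0) {k} \<notin> ?Mx"
              proof
                assume "mk_block (top_part l0) {k} \<in> ?Mx"
                then obtain q where q: "q \<in> X" "{k} = top_part q" by auto
                then obtain l where "l \<in> L" "q = mk_block (top_part l) {f l}" by (auto simp: X_def)
                hence "{k} = top_part l" using q by simp
                thus False using k(2) \<open>l \<in> L\<close> by auto
              qed
              show "?Mx \<subset> X"
              proof (rule psubsetI)
                show "?Mx \<subseteq> X" by blast
                show "?Mx \<noteq> X" using p0 nM by blast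
              qed
            qed
            also have "\<dots> \<le> card L" unfolding X_def using fL by (rule card_image_le)
            finally show ?thesis using ar by (simp add: L_def)
          qed
          hence xT: "x \<in> T" by (rule sq[OF xP])
          have "card (glines (comp n y y)) < r"
          proof -
            let ?Ny = "{q\<in>Y. \<exists>p\<in>Y. bot_part p = top_part q}"
            have "card (glines (comp n y y)) \<le> card ?Ny"
              unfolding glines_comp[OF yP yP] gy by (rule card_CLL_right[OF vY vY fX(2)])
            also have "\<dots> < card Y"
            proof (rule psubset_card_mono[OF fX(2)])
              have q0: "mk_block {k} (bot_part l0) \<in> Y" using l0 by (auto simp: Y_def)
              have nM: "mk_block {k} (bot_part l0) \<notin> ?Ny"
              proof
                assume "mk_block {k} (bot_part l0) \<in> ?Ny"
                then obtain p where p: "p \<in> Y" "bot_part p = {k}" by auto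
                then obtain l where l: "l \<in> L" "p = mk_block {f l} (bot_part l)" by (auto simp: Y_def)
                hence "bot_part l = {k}" using p by simp
                moreover have "l \<in> M" using l(1) True by simp
                then obtain l' where "l' \<in> L" "bot_part l = top_part l'" by (auto simp: M_def)
                ultimately show False using k(2) by auto
              qed
              show "?Ny \<subset> Y"
              proof (rule psubsetI)
                show "?Ny \<subseteq> Y" by blast
                show "?Ny \<noteq> Y" using q0 nM by blast
              qed
            qed
            also have "\<dots> \<le> card L" unfolding Y_def using fL by (rule card_image_le)
            finally show ?thesis using ar by (simp add: L_def)
          qed
          hence yT: "y \<in> T" by (rule sq[OF yP])
          show ?thesis using cl[OF xT yT] axy by simp
        qed
      qed
    qed
  qed
  show ?thesis using main by blast
qed


theorem mainTheorem10:
  fixes n :: nat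
  assumes "n \<ge> 2"
  shows "{T. completely_isolated n T} = {PIstar n, Sym n, PIstar n - Sym n}"
proof -
  have zP: "zero n \<in> PIstar n" by (rule zero_PI)
  have zS: "zero n \<notin> Sym n"
  proof
    assume "zero n \<in> Sym n"
    hence "card (glines (zero n)) = n" using Sym_rank by blast
    thus False using assms by (simp add: glines_zero)
  qed
  have eS: "symel n id \<in> Sym n" by (rule permutes_symel_Sym) simp
  have SymP: "Sym n \<subseteq> PIstar n" using Sym_rank by blast
  show ?thesis
  proof (rule equalityI)
    show "{T. completely_isolated n T} \<subseteq> {PIstar n, Sym n, PIstar n - Sym n}"
    proof
      fix T assume "T \<in> {T. completely_isolated n T}"
      hence ne: "T \<noteq> {}" and TS: "T \<subseteq> PIstar n"
        and clT: "\<And>x y. x \<in> T \<Longrightarrow> y \<in> T \<Longrightarrow> comp n x y \<in> T"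
        and ciT: "\<And>x y. x \<in> PIstar n \<Longrightarrow> y \<in> PIstar n \<Longrightarrow> comp n x y \<in> T \<Longrightarrow> x \<in> T \<or> y \<in> T"
        by (auto simp: completely_isolated_def subsemigroup_def)
      define U where "U = PIstar n - T"
      have US: "U \<subseteq> PIstar n" by (auto simp: U_def)
      have clU: "comp n x y \<in> U" if "x \<in> U" "y \<in> U" for x y
      proof -
        have "x \<in> PIstar n" "y \<in> PIstar n" "x \<notin> T" "y \<notin> T" using that by (auto simp: U_def)
        thus ?thesis using ciT comp_PI by (auto simp: U_def)
      qed
      have ciU: "x \<in> U \<or> y \<in> U" if "x \<in> PIstar n" "y \<in> PIstar n" "comp n x y \<in> U" for x y
        using that clT by (auto simp: U_def)
      have dich: "Sym n \<inter> T = {} \<or> Sym n \<inter> U = {}"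
      proof (rule ccontr)
        assume "\<not> ?thesis"
        then obtain g h where g: "g \<in> Sym n \<inter> T" and h: "h \<in> Sym n \<inter> U" by blast
        have "symel n id \<in> Sym n \<inter> T"
          by (rule closed_Sym_id[OF _ g]) (auto intro: Sym_closed clT)
        moreover have "symel n id \<in> Sym n \<inter> U"
          by (rule closed_Sym_id[OF _ h]) (auto intro: Sym_closed clU)
        ultimately show False by (auto simp: U_def)
      qed
      show "T \<in> {PIstar n, Sym n, PIstar n - Sym n}"
      proof (cases "zero n \<in> T")
        case True
        have J: "PIstar n - Sym n \<subseteq> T" by (rule K[OF TS clT ciT True])
        show ?thesis
        proof (cases "Sym n \<inter> U = {}")
          case True
          hence "T = PIstar n" using TS SymP J by (auto simp: U_def)
          thus ?thesis by simp
        next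
          case False
          hence "Sym n \<inter> T = {}" using dich by blast
          hence "T = PIstar n - Sym n" using TS J by auto
          thus ?thesis by simp
        qed
      next
        case False
        hence zU: "zero n \<in> U" using zP by (simp add: U_def)
        have J: "PIstar n - Sym n \<subseteq> U" by (rule K[OF US clU ciU zU])
        hence TSym: "T \<subseteq> Sym n" using TS by (auto simp: U_def)
        hence "Sym n \<inter> T \<noteq> {}" using ne by blast
        hence "Sym n \<inter> U = {}" using dich by blast
        hence "T = Sym n" using TSym SymP by (auto simp: U_def)
        thus ?thesis by simp
      qed
    qed
  next
    show "{PIstar n, Sym n, PIstar n - Sym n} \<subseteq> {T. completely_isolated n T}"
    proof -
      have "completely_isolated n (PIstar n)"
        unfolding completely_isolated_def subsemigroup_def using zP comp_PI by blast
      moreover have "completely_isolated n (Sym n)"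
        unfolding completely_isolated_def subsemigroup_def
        using eS SymP Sym_closed Sym_factor by blast
      moreover have "completely_isolated n (PIstar n - Sym n)"
        unfolding completely_isolated_def subsemigroup_def
      proof (intro conjI ballI impI)
        show "PIstar n - Sym n \<noteq> {}" using zP zS by blast
        show "PIstar n - Sym n \<subseteq> PIstar n" by blast
      next
        fix x y assume x: "x \<in> PIstar n - Sym n" and y: "y \<in> PIstar n - Sym n"
        show "comp n x y \<in> PIstar n - Sym n" using x y comp_PI Sym_factor by blast
      next
        fix x y assume x: "x \<in> PIstar n" and y: "y \<in> PIstar n" and c: "comp n x y \<in> PIstar n - Sym n"
        show "x \<in> PIstar n - Sym n \<or> y \<in> PIstar n - Sym n" using x y c Sym_closed by blast
      qed
      ultimately show ?thesis by blast
    qed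
  qed
qed

end
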